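(* Let $S\subset\mathbb C^3_{x,y,z}$ be the smooth surface $x+y+xyz=1$, and let $L_1=\{x=0\}$, $L_2=\{yz+1=0\}$, $L_3=\{y=0\}$, $L_4=\{xz+1=0\}$, $L_5=\{z=0\}$ (zero loci in $S$); these are lines in $S$ (explicitly $L_1=\{(0,1,z)\}$, $L_2=\{(x,1,-1)\}$, $L_3=\{(1,0,z)\}$, $L_4=\{(1,y,-1)\}$, $L_5=\{(x,1-x,0)\}$). Then for every non-constant morphism $\phi:\mathbb C\to S$ the image $\phi(\mathbb C)$ is contained in one of $L_1,\dots,L_5$; i.e. $L_1,\dots,L_5$ are the only polynomial curves in $S$.
   Context: A polynomial curve in $S$ is the image of a non-constant morphism $\mathbb C\to S$. *)

theory Defs
  imports "HOL-Computational_Algebra.Polynomial"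
begin

definition surfS :: "(complex \<times> complex \<times> complex) set" where
  "surfS = {(x,y,z). x + y + x*y*z = 1}"

definition lineL :: "nat \<Rightarrow> (complex \<times> complex \<times> complex) set" where
  "lineL i = (if i = 1 then {(x,y,z) \<in> surfS. x = 0}
         else if i = 2 then {(x,y,z) \<in> surfS. y*z + 1 = 0}
         else if i = 3 then {(x,y,z) \<in> surfS. y = 0}
         else if i = 4 then {(x,y,z) \<in> surfS. x*z + 1 = 0}
         else if i = 5 then {(x,y,z) \<in> surfS. z = 0}
         else {})"

text \<open>A morphism C -> C^3 is given by three polynomials; its map.\<close>
definition polymap :: "complex poly \<Rightarrow> complex poly \<Rightarrow> complex poly \<Rightarrow> complex \<Rightarrow> complex \<times> complex \<times> complex" where
  "polymap p q r t = (poly p t, poly q t, poly r t)"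

end

theory Submission
  imports Defs
begin

lemma side:
  fixes p q r :: "complex poly"
  assumes E: "p + q + p*q*r = 1" and nc: "\<not>(degree p = 0 \<and> degree q = 0 \<and> degree r = 0)"
    and dp: "degree p = 0" and rnz: "r \<noteq> 0"
  shows "p = 0 \<or> q = 0 \<or> (p = 1 \<and> r = -1)"
proof -
  obtain a where pa: "p = [:a:]" using dp degree_eq_zeroE by blast
  have E2: "q * (1 + p*r) = 1 - p" using E by (simp add: algebra_simps)
  show ?thesis
  proof (cases "a = 0")
    case True then show ?thesis using pa by simp
  next
    case a0: False
    show ?thesis
    proof (cases "a = 1")
      case True
      hence p1: "p = 1" using pa by (simp add: one_pCons)
      hence "q * (1 + r) = 0" using E2 by simp
      hence "q = 0 \<or> 1 + r = 0" by simp
      moreover have "1 + r = 0 \<Longrightarrow> r = -1" by (simp add: add_eq_0_iff)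
      ultimately show ?thesis using p1 by blast
    next
      case a1: False
      have "1 - p = [:1 - a:]" using pa by (simp add: one_pCons)
      hence nz: "1 - p \<noteq> 0" and d0: "degree (1 - p) = 0" using a1 by auto
      have qnz: "q \<noteq> 0" and snz: "1 + p*r \<noteq> 0" using E2 nz by auto
      have "degree q + degree (1 + p*r) = 0"
        using degree_mult_eq[OF qnz snz] E2 d0 by simp
      hence dq: "degree q = 0" and ds: "degree (1 + p*r) = 0" by auto
      have pnz: "p \<noteq> 0" using pa a0 by simp
      have dpr: "degree (p*r) = degree r" using degree_mult_eq[OF pnz rnz] dp by simp
      have "degree r = 0"
      proof (rule ccontr)
        assume "degree r \<noteq> 0"
        hence "degree (1::complex poly) < degree (p*r)" using dpr by simp
        hence "degree (1 + p*r) = degree (p*r)" by (rule degree_add_eq_right)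
        thus False using ds dpr \<open>degree r \<noteq> 0\<close> by simp
      qed
      thus ?thesis using nc dp dq by blast
    qed
  qed
qed

lemma key:
  fixes p q r :: "complex poly"
  assumes E: "p + q + p*q*r = 1" and nc: "\<not>(degree p = 0 \<and> degree q = 0 \<and> degree r = 0)"
  shows "r = 0 \<or> p = 0 \<or> q = 0 \<or> (p = 1 \<and> r = -1) \<or> (q = 1 \<and> r = -1)"
proof (cases "r = 0")
  case True then show ?thesis by simp
next
  case rnz: False
  show ?thesis
  proof (cases "degree p = 0")
    case True then show ?thesis using side[OF E nc True rnz] by blast
  next
    case dp: False
    show ?thesis
    proof (cases "degree q = 0")
      case True
      have E': "q + p + q*p*r = 1" using E by (simp add: algebra_simps)
      have nc': "\<not>(degree q = 0 \<and> degree p = 0 \<and> degree r = 0)" using nc by blast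
      show ?thesis using side[OF E' nc' True rnz] by blast
    next
      case dq: False
      have pnz: "p \<noteq> 0" using dp by auto
      have qnz: "q \<noteq> 0" using dq by auto
      have "degree (p*q*r) = degree p + degree q + degree r"
        using pnz qnz rnz by (simp add: degree_mult_eq)
      moreover have "p*q*r = 1 - p - q" using E by (simp add: algebra_simps)
      moreover have "degree (1 - p - q) \<le> max (degree p) (degree q)"
      proof -
        have "degree (1 - p) \<le> degree p" using degree_diff_le_max[of 1 p] by simp
        thus ?thesis using degree_diff_le_max[of "1-p" q] by simp
      qed
      ultimately have False using dp dq by simp
      thus ?thesis ..
    qed
  qed
qed

theorem lemma8p10:
  fixes p q r :: "complex poly"
  assumes "\<forall>t. polymap p q r t \<in> surfS"
    and "\<not> (\<exists>c. \<forall>t. polymap p q r t = c)"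
  shows "\<exists>i\<in>{1..5::nat}. range (polymap p q r) \<subseteq> lineL i"
proof -
  have pt: "\<And>t. poly p t + poly q t + poly p t * poly q t * poly r t = 1"
    using assms(1) by (auto simp: polymap_def surfS_def)
  have "poly (p + q + p*q*r) = poly 1" using pt by (auto simp: fun_eq_iff)
  hence E: "p + q + p*q*r = 1" by (simp add: poly_eq_poly_eq_iff)
  have nc: "\<not>(degree p = 0 \<and> degree q = 0 \<and> degree r = 0)"
  proof
    assume "degree p = 0 \<and> degree q = 0 \<and> degree r = 0"
    then obtain a b c where "p = [:a:]" "q = [:b:]" "r = [:c:]"
      by (meson degree_eq_zeroE)
    hence "\<forall>t. polymap p q r t = (a,b,c)" by (simp add: polymap_def)
    thus False using assms(2) by blast
  qed
  have S: "\<And>t. polymap p q r t \<in> surfS" using assms(1) by blast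
  from key[OF E nc] show ?thesis
  proof (elim disjE conjE)
    assume "r = 0" thus ?thesis using S by (intro bexI[of _ 5]) (auto simp: lineL_def polymap_def)
  next
    assume "p = 0" thus ?thesis using S by (intro bexI[of _ 1]) (auto simp: lineL_def polymap_def)
  next
    assume "q = 0" thus ?thesis using S by (intro bexI[of _ 3]) (auto simp: lineL_def polymap_def)
  next
    assume "p = 1" "r = -1" thus ?thesis using S by (intro bexI[of _ 4]) (auto simp: lineL_def polymap_def)
  next
    assume "q = 1" "r = -1" thus ?thesis using S by (intro bexI[of _ 2]) (auto simp: lineL_def polymap_def)
  qed
qed

end
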